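(* Consider two GP-ASSMs (as defined in the context), built from the same training data, kernel and mean function, with maximum memory lengths $\overline m,\overline m'\in\mathbb{N}$, $\overline m'>\overline m$, evaluated along the same states and inputs $\bm\xi_{0:t}$, so that $\bm x_{t+1}^m\sim\mathcal N(\bm f_t(\bm\xi_t,\Xi^m_t),F_t(\bm\xi_t,\Xi^m_t))$ and $\bm x_{t+1}^{m'}\sim\mathcal N(\bm f_t(\bm\xi_t,\Xi^{m'}_t),F_t(\bm\xi_t,\Xi^{m'}_t))$. Then $$\operatorname{tr}\big(F_t(\bm\xi_t,\Xi^{m'}_t)\big)\le\operatorname{tr}\big(F_t(\bm\xi_t,\Xi^{m}_t)\big)$$ holds for all $t\in\mathbb{N}$.
   Context: Training set $\mathcal D=\{X,Y\}$ with input matrix $X\in\mathbb{R}^{n_\xi\times n_{\mathcal D}}$ and output matrix $Y\in\mathbb{R}^{n_{\mathcal D}\times n_x}$, outputs corrupted by Gaussian noise $\mathcal N(0,\sigma_n^2 I)$. A kernel $k:\mathbb{R}^{n_\xi}\times\mathbb{R}^{n_\xi}\to\mathbb{R}$ (symmetric, positive semidefinite) and a continuous mean function $m:\mathbb{R}^{n_\xi}\to\mathbb{R}$ are used for every output dimension. For matrices $A=[a_1,\dots,a_p]$, $B=[b_1,\dots,b_q]$ with columns in $\mathbb{R}^{n_\xi}$, $K(A,B)$ is the $p\times q$ matrix with entries $k(a_i,b_j)$, $\bm k(z,A)=(k(z,a_1),\dots,k(z,a_p))^\top$, $\bm m(A)=(m(a_1),\dots,m(a_p))^\top$, and $K:=K(X,X)$.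 GP-ASSM with maximum memory length $\overline m\in\mathbb{N}$: states $\bm x_t\in\mathbb{R}^{n_x}$, inputs $\bm u_t\in\mathbb{R}^{n_u}$, $\bm\xi_t=[\bm x_t;\bm u_t]\in\mathbb{R}^{n_\xi}$, $n_\xi=n_x+n_u$. For $t\in\mathbb{N}$ let $\underline m=\min(t,\overline m)$, memory $\Xi^m_t=[\bm\xi_{t-1},\dots,\bm\xi_{t-\underline m}]$ (empty if $\underline m=0$), $X^m_t=[X,\bm\xi_{t-\underline m},\dots,\bm\xi_{t-1}]$, $Y^m_t=[Y^\top,\bm x_{t-\underline m+1},\dots,\bm x_t]^\top$, and with $\Xi=[\bm\xi_{t-\underline m},\dots,\bm\xi_{t-1}]$, $K^m_t=\begin{bmatrix}K+\sigma_n^2I & K(X,\Xi)\\ K(\Xi,X)&K(\Xi,\Xi)\end{bmatrix}$ (and $K^m_t=K+\sigma_n^2 I$ if $\underline m=0$). Define $\bm f_t(\bm\xi_t,\Xi^m_t)\in\mathbb{R}^{n_x}$ with $i$-th component $m(\bm\xi_t)+\bm k(\bm\xi_t,X^m_t)^\top(K^m_t)^{-1}\big((Y^m_t)_{:,i}-\bm m(X^m_t)\big)$ and the diagonal matrix $F_t(\bm\xi_t,\Xi^m_t)$ with all diagonal entries $k(\bm\xi_t,\bm\xi_t)-\bm k(\bm\xi_t,X^m_t)^\top(K^m_t)^{-1}\bm k(\bm\xi_t,X^m_t)$ (inverses are Moore–Penrose pseudoinverses if singular). The GP-ASSM generates $\bm x^m_{t+1}\mid\bm\xi_{0:t}\sim\mathcal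 N(\bm f_t(\bm\xi_t,\Xi^m_t),F_t(\bm\xi_t,\Xi^m_t))$; quantities with superscript $m'$ are defined in the same way with $\overline m'$ in place of $\overline m$. *)

theory Defs
  imports "Jordan_Normal_Form.Matrix"
begin

definition mat_trace :: "real mat \<Rightarrow> real" where
  "mat_trace A = (\<Sum>i<dim_row A. A $$ (i, i))"

definition is_mp_pinv :: "real mat \<Rightarrow> real mat \<Rightarrow> bool" where
  "is_mp_pinv A B \<longleftrightarrow> B \<in> carrier_mat (dim_col A) (dim_row A) \<and>
     A * B * A = A \<and> B * A * B = B \<and>
     transpose_mat (A * B) = A * B \<and> transpose_mat (B * A) = B * A"

definition mp_pinv :: "real mat \<Rightarrow> real mat" where
  "mp_pinv A = (SOME B. is_mp_pinv A B)"

definition psd_kernel :: "nat \<Rightarrow> (real vec \<Rightarrow> real vec \<Rightarrow> real) \<Rightarrow> bool" where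
  "psd_kernel n k \<longleftrightarrow>
     (\<forall>a b. a \<in> carrier_vec n \<longrightarrow> b \<in> carrier_vec n \<longrightarrow> k a b = k b a) \<and>
     (\<forall>as c. set as \<subseteq> carrier_vec n \<longrightarrow>
        (\<Sum>i<length as. \<Sum>j<length as. c i * c j * k (as ! i) (as ! j)) \<ge> 0)"

definition cont_mean :: "nat \<Rightarrow> (real vec \<Rightarrow> real) \<Rightarrow> bool" where
  "cont_mean n m \<longleftrightarrow> (\<forall>v \<in> carrier_vec n. \<forall>\<epsilon>>0. \<exists>\<delta>>0. \<forall>w \<in> carrier_vec n.
     sqrt (\<Sum>i<n. (w $ i - v $ i)\<^sup>2) < \<delta> \<longrightarrow> \<bar>m w - m v\<bar> < \<epsilon>)"

definition kmat :: "(real vec \<Rightarrow> real vec \<Rightarrow> real) \<Rightarrow> real vec list \<Rightarrow> real vec list \<Rightarrow> real mat" where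
  "kmat k as bs = mat (length as) (length bs) (\<lambda>(i, j). k (as ! i) (bs ! j))"

definition kvec :: "(real vec \<Rightarrow> real vec \<Rightarrow> real) \<Rightarrow> real vec \<Rightarrow> real vec list \<Rightarrow> real vec" where
  "kvec k z as = vec (length as) (\<lambda>i. k z (as ! i))"

definition mvec :: "(real vec \<Rightarrow> real) \<Rightarrow> real vec list \<Rightarrow> real vec" where
  "mvec m as = vec (length as) (\<lambda>i. m (as ! i))"

definition mem_pts :: "nat \<Rightarrow> (nat \<Rightarrow> real vec) \<Rightarrow> nat \<Rightarrow> real vec list" where
  "mem_pts mbar \<xi> t = map \<xi> [t - min t mbar ..< t]"

definition Xm :: "real mat \<Rightarrow> nat \<Rightarrow> (nat \<Rightarrow> real vec) \<Rightarrow> nat \<Rightarrow> real vec list" where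
  "Xm X mbar \<xi> t = cols X @ mem_pts mbar \<xi> t"

definition Ym :: "real mat \<Rightarrow> nat \<Rightarrow> (nat \<Rightarrow> real vec) \<Rightarrow> nat \<Rightarrow> real mat" where
  "Ym Y mbar x t = (let ms = map x [t - min t mbar + 1 ..< t + 1] in
     mat (dim_row Y + length ms) (dim_col Y)
       (\<lambda>(i, j). if i < dim_row Y then Y $$ (i, j) else (ms ! (i - dim_row Y)) $ j))"

definition Km :: "(real vec \<Rightarrow> real vec \<Rightarrow> real) \<Rightarrow> real \<Rightarrow> real mat \<Rightarrow> nat \<Rightarrow>
    (nat \<Rightarrow> real vec) \<Rightarrow> nat \<Rightarrow> real mat" where
  "Km k \<sigma>n X mbar \<xi> t = (let ps = Xm X mbar \<xi> t in
     mat (length ps) (length ps)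
       (\<lambda>(i, j). k (ps ! i) (ps ! j) + (if i = j \<and> i < dim_col X then \<sigma>n\<^sup>2 else 0)))"

definition GP_f :: "(real vec \<Rightarrow> real vec \<Rightarrow> real) \<Rightarrow> (real vec \<Rightarrow> real) \<Rightarrow> real \<Rightarrow>
    real mat \<Rightarrow> real mat \<Rightarrow> nat \<Rightarrow> (nat \<Rightarrow> real vec) \<Rightarrow> (nat \<Rightarrow> real vec) \<Rightarrow> nat \<Rightarrow> real vec" where
  "GP_f k m \<sigma>n X Y mbar x \<xi> t = (let ps = Xm X mbar \<xi> t; Yt = Ym Y mbar x t in
     vec (dim_col Y) (\<lambda>i. m (\<xi> t) +
       kvec k (\<xi> t) ps \<bullet> (mp_pinv (Km k \<sigma>n X mbar \<xi> t) *\<^sub>v (col Yt i - mvec m ps))))"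

definition GP_var :: "(real vec \<Rightarrow> real vec \<Rightarrow> real) \<Rightarrow> real \<Rightarrow> real mat \<Rightarrow> nat \<Rightarrow>
    (nat \<Rightarrow> real vec) \<Rightarrow> nat \<Rightarrow> real" where
  "GP_var k \<sigma>n X mbar \<xi> t = (let ps = Xm X mbar \<xi> t; kv = kvec k (\<xi> t) ps in
     k (\<xi> t) (\<xi> t) - kv \<bullet> (mp_pinv (Km k \<sigma>n X mbar \<xi> t) *\<^sub>v kv))"

definition GP_F :: "(real vec \<Rightarrow> real vec \<Rightarrow> real) \<Rightarrow> real \<Rightarrow> real mat \<Rightarrow> nat \<Rightarrow> nat \<Rightarrow>
    (nat \<Rightarrow> real vec) \<Rightarrow> nat \<Rightarrow> real mat" where
  "GP_F k \<sigma>n X nx mbar \<xi> t =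
     mat nx nx (\<lambda>(i, j). if i = j then GP_var k \<sigma>n X mbar \<xi> t else 0)"

end

theory Submission
  imports Defs "Jordan_Normal_Form.Gauss_Jordan_Elimination"
begin


declare assoc_mult_mat[simp del] assoc_mult_mat_vec[simp del]

lemma massoc:
  fixes A B C :: "real mat"
  assumes "dim_col A = dim_row B" "dim_col B = dim_row C"
  shows "A * B * C = A * (B * C)"
proof -
  have a: "A \<in> carrier_mat (dim_row A) (dim_col A)" by (rule carrier_matI) auto
  have b: "B \<in> carrier_mat (dim_col A) (dim_col B)" using assms(1) by (intro carrier_matI) auto
  have c: "C \<in> carrier_mat (dim_col B) (dim_col C)" using assms(2) by (intro carrier_matI) auto
  show ?thesis by (rule assoc_mult_mat[OF a b c])
qed

lemma ref_one_inverse: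
  fixes R :: "real mat"
  assumes R: "R \<in> carrier_mat n n" and pf: "pivot_fun R f n"
  defines "E \<equiv> mat n n (\<lambda>(j,i). if f i < n \<and> j = f i then 1 else 0)"
  shows "R * E * R = R"
proof -
  have dr: "dim_row R = n" using R by auto
  have RE: "R * E = mat n n (\<lambda>(i',i). if i' = i \<and> f i < n then 1 else 0)"
  proof (rule eq_matI)
    fix i' i assume i': "i' < dim_row (mat n n (\<lambda>(i',i). if i' = i \<and> f i < n then 1 else (0::real)))"
      and i: "i < dim_col (mat n n (\<lambda>(i',i). if i' = i \<and> f i < n then 1 else (0::real)))"
    have "(R * E) $$ (i', i) = (\<Sum>j<n. R $$ (i', j) * E $$ (j, i))"
      using i i' R unfolding E_def by (auto simp: scalar_prod_def lessThan_atLeast0)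
    also have "\<dots> = (if f i < n then R $$ (i', f i) else 0)"
      using i i' unfolding E_def by (auto simp: if_distrib cong: if_cong)
    also have "\<dots> = (if i' = i \<and> f i < n then 1 else 0)"
      using pivot_funD[OF dr pf] i i' by auto
    finally show "(R * E) $$ (i', i) = mat n n (\<lambda>(i',i). if i' = i \<and> f i < n then 1 else (0::real)) $$ (i', i)"
      using i i' by auto
  qed (use R E_def in auto)
  show ?thesis
  proof (rule eq_matI)
    fix i' k assume i': "i' < dim_row R" and k: "k < dim_col R"
    have "(R * E * R) $$ (i', k) = (\<Sum>i<n. (if i' = i \<and> f i < n then 1 else 0) * R $$ (i, k))"
      using i' k R unfolding RE by (auto simp: scalar_prod_def lessThan_atLeast0)
    also have "\<dots> = (\<Sum>i<n. if i = i' then (if f i' < n then R $$ (i', k) else 0) else 0)"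
      by (rule sum.cong) auto
    also have "\<dots> = (if f i' < n then R $$ (i', k) else 0)"
      using i' R by simp
    also have "\<dots> = R $$ (i', k)"
    proof -
      have "f i' \<le> n" using pivot_funD[OF dr pf] i' R by auto
      moreover have "f i' = n \<Longrightarrow> R $$ (i', k) = 0" using pivot_funD[OF dr pf] i' k R by auto
      ultimately show ?thesis by auto
    qed
    finally show "(R * E * R) $$ (i', k) = R $$ (i', k)" .
  qed (use R E_def RE in auto)
qed

lemma one_inverse_exists:
  fixes A :: "real mat"
  assumes A: "A \<in> carrier_mat n n"
  shows "\<exists>G \<in> carrier_mat n n. A * G * A = A"
proof -
  define R where "R = gauss_jordan_single A"
  note gj = gauss_jordan_single[OF A R_def[symmetric]]
  obtain f where pf: "pivot_fun R f n" using gj(2,3) unfolding row_echelon_form_def by auto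
  obtain P Q where PQ: "R = P * A" "P \<in> carrier_mat n n" "Q \<in> carrier_mat n n" "Q * P = 1\<^sub>m n"
    using gj(4) by auto
  define E where "E \<equiv> mat n n (\<lambda>(j,i). if f i < n \<and> j = f i then 1 else (0::real))"
  have E: "E \<in> carrier_mat n n" unfolding E_def by auto
  have RER: "R * E * R = R" using ref_one_inverse[OF gj(2) pf] unfolding E_def .
  have AQR: "A = Q * R"
  proof -
    have "Q * R = Q * (P * A)" using PQ by simp
    also have "\<dots> = (Q * P) * A" using assoc_mult_mat[OF PQ(3) PQ(2) A] by simp
    finally show ?thesis using PQ A by auto
  qed
  have "A * (E * P) * A = Q * (R * E * R)"
  proof -
    have "A * (E * P) * A = Q * R * (E * P) * A" using AQR by simp
    also have "\<dots> = (Q * R) * ((E * P) * A)" using PQ(2,3) A E gj(2) by (intro massoc) auto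
    also have "\<dots> = (Q * R) * (E * (P * A))" using PQ(2,3) A E gj(2) by (subst massoc) auto
    also have "\<dots> = Q * (R * (E * (P * A)))" using PQ(2,3) A E gj(2) by (intro massoc) auto
    also have "\<dots> = Q * (R * E * (P * A))" using PQ(2,3) A E gj(2) by (subst massoc[of R E]) auto
    finally show ?thesis using PQ by simp
  qed
  also have "\<dots> = A" using RER AQR by simp
  finally show ?thesis using E PQ by (intro bexI[of _ "E * P"]) auto
qed

lemma mat_eq_of_minus_zero:
  fixes A B :: "real mat"
  assumes "A \<in> carrier_mat nr nc" "B \<in> carrier_mat nr nc" "A - B = 0\<^sub>m nr nc"
  shows "A = B"
proof (rule eq_matI)
  fix i j assume ij: "i < dim_row B" "j < dim_col B"
  have "(A - B) $$ (i,j) = A$$(i,j) - B$$(i,j)" using ij by (rule index_minus_mat)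
  moreover have "(A - B) $$ (i,j) = 0" using assms(2,3) ij by simp
  ultimately show "A $$ (i, j) = B $$ (i, j)" by simp
qed (use assms in auto)

lemma mmt_zero:
  fixes M :: "real mat"
  assumes M: "M \<in> carrier_mat n m" and z: "M * transpose_mat M = 0\<^sub>m n n"
  shows "M = 0\<^sub>m n m"
proof (rule eq_matI)
  fix i j assume i: "i < dim_row (0\<^sub>m n m)" and j: "j < dim_col (0\<^sub>m n m :: real mat)"
  have "(M * transpose_mat M) $$ (i, i) = (\<Sum>l<m. (M $$ (i, l))^2)"
    using i M by (auto simp: scalar_prod_def lessThan_atLeast0 power2_eq_square)
  hence s: "(\<Sum>l<m. (M $$ (i, l))^2) = 0" using z i by simp
  have "\<forall>l\<in>{..<m}. (M $$ (i, l))^2 = 0"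
    using sum_nonneg_eq_0_iff[of "{..<m}" "\<lambda>l. (M $$ (i, l))^2"] s by auto
  thus "M $$ (i, j) = 0\<^sub>m n m $$ (i, j)" using i j by auto
qed (use M in auto)

lemma cancel_right:
  fixes C X Y :: "real mat"
  assumes C: "C \<in> carrier_mat n n" and sym: "transpose_mat C = C"
    and X: "X \<in> carrier_mat k n" and Y: "Y \<in> carrier_mat k n"
    and eq: "X * C * C = Y * C * C"
  shows "X * C = Y * C"
proof -
  define D where "D = X - Y"
  have D: "D \<in> carrier_mat k n" using X Y D_def by auto
  have "D * C = X * C - Y * C"
    unfolding D_def by (rule minus_mult_distrib_mat[OF X Y C])
  hence "D * C * C = X * C * C - Y * C * C"
    using minus_mult_distrib_mat[of "X * C" k n "Y * C" C n] X Y C by simp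
  have YCC: "Y * C * C \<in> carrier_mat k n" using Y C by (meson mult_carrier_mat)
  hence DCC: "D * C * C = 0\<^sub>m k n" using eq minus_r_inv_mat[OF YCC] \<open>D * C * C = X * C * C - Y * C * C\<close> by simp
  have "(D * C) * transpose_mat (D * C) = (D * C * C) * transpose_mat D"
    using transpose_mult[OF D C] sym massoc[of "D * C" C "transpose_mat D"] D C by simp
  also have "\<dots> = 0\<^sub>m k k" using DCC D by simp
  finally have "D * C = 0\<^sub>m k n" using mmt_zero[of "D * C" k n] D C by auto
  hence z: "X * C - Y * C = 0\<^sub>m k n" using minus_mult_distrib_mat[OF X Y C] unfolding D_def by simp
  show ?thesis
  proof (rule eq_matI)
    fix i j assume "i < dim_row (Y * C)" "j < dim_col (Y * C)"
    thus "(X * C) $$ (i, j) = (Y * C) $$ (i, j)"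
      using arg_cong[OF z, of "\<lambda>M. M $$ (i, j)"] X Y C by auto
  qed (use X Y C in auto)
qed


lemma cancel_left:
  fixes C X Y :: "real mat"
  assumes C: "C \<in> carrier_mat n n" and sym: "transpose_mat C = C"
    and X: "X \<in> carrier_mat n k" and Y: "Y \<in> carrier_mat n k"
    and eq: "C * C * X = C * C * Y"
  shows "C * X = C * Y"
proof -
  have "transpose_mat (C * C * X) = transpose_mat X * transpose_mat (C * C)"
    by (rule transpose_mult) (use C X in auto)
  also have "\<dots> = transpose_mat X * (C * C)" using transpose_mult[OF C C] sym by simp
  also have "\<dots> = transpose_mat X * C * C" using C X by (simp add: massoc)
  finally have tX: "transpose_mat (C * C * X) = transpose_mat X * C * C" .
  have "transpose_mat (C * C * Y) = transpose_mat Y * transpose_mat (C * C)"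
    by (rule transpose_mult) (use C Y in auto)
  also have "\<dots> = transpose_mat Y * (C * C)" using transpose_mult[OF C C] sym by simp
  also have "\<dots> = transpose_mat Y * C * C" using C Y by (simp add: massoc)
  finally have tY: "transpose_mat (C * C * Y) = transpose_mat Y * C * C" .
  have "transpose_mat X * C * C = transpose_mat Y * C * C" using tX tY eq by simp
  hence "transpose_mat X * C = transpose_mat Y * C"
    using cancel_right[OF C sym, of "transpose_mat X" k "transpose_mat Y"] X Y by simp
  hence "transpose_mat (transpose_mat X * C) = transpose_mat (transpose_mat Y * C)" by simp
  thus ?thesis using C X Y sym by (simp add: transpose_mult)
qed

lemma mp_exists_sym:
  fixes C :: "real mat"
  assumes C: "C \<in> carrier_mat n n" and sym: "transpose_mat C = C"
  shows "\<exists>B. is_mp_pinv C B"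
proof -
  obtain G where G: "G \<in> carrier_mat n n" and H0: "(C * C * C) * G * (C * C * C) = C * C * C"
    using one_inverse_exists[of "C * C * C" n] C by (meson mult_carrier_mat)
  have d[simp]: "dim_row C = n" "dim_col C = n" "dim_row G = n" "dim_col G = n"
    using C G by auto
  have one: "1\<^sub>m n * C = C" "C * 1\<^sub>m n = C" using C by auto
  have S1: "C * (C * (C * (G * (C * C)))) = C * C"
  proof -
    have "(C * C * C * G * C) * C * C = C * C * C"
      using H0 by (simp add: massoc)
    hence "(C * C * C * G * C) * C = C * C"
      using cancel_right[OF C sym, of "C * C * C * G * C" n C] C G by (simp add: massoc)
    thus ?thesis by (simp add: massoc)
  qed
  have E1: "C * (C * (C * (G * C))) = C"
  proof -
    have "(C * C * C * G) * C * C = 1\<^sub>m n * C * C"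
      using S1 one by (simp add: massoc)
    hence "(C * C * C * G) * C = 1\<^sub>m n * C"
      using cancel_right[OF C sym, of "C * C * C * G" n "1\<^sub>m n"] C G by (simp add: massoc)
    thus ?thesis using one by (simp add: massoc)
  qed
  have E3: "C * (C * (G * (C * C))) = C"
  proof -
    have "C * C * (C * G * C * C) = C * C * 1\<^sub>m n"
      using S1 one by (simp add: massoc)
    hence "C * (C * G * C * C) = C * 1\<^sub>m n"
      using cancel_left[OF C sym, of "C * G * C * C" n "1\<^sub>m n"] C G by (simp add: massoc)
    thus ?thesis using one by (simp add: massoc)
  qed
  have E2: "C * (G * (C * (C * C))) = C"
  proof -
    have "C * C * (C * G * C * C * C) = C * C * C"
      using H0 by (simp add: massoc)
    hence "C * (C * G * C * C * C) = C * C"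
      using cancel_left[OF C sym, of "C * G * C * C * C" n C] C G by (simp add: massoc)
    hence "C * C * (G * C * C * C) = C * C * 1\<^sub>m n"
      using one by (simp add: massoc)
    hence "C * (G * C * C * C) = C * 1\<^sub>m n"
      using cancel_left[OF C sym, of "G * C * C * C" n "1\<^sub>m n"] C G by (simp add: massoc)
    thus ?thesis using one by (simp add: massoc)
  qed
  define B where "B = C * G * C"
  have B: "B \<in> carrier_mat n n" unfolding B_def using C G by (meson mult_carrier_mat)
  have m1: "C * B * C = C" unfolding B_def using E3 by (simp add: massoc)
  have m2: "B * C * B = B"
  proof -
    have "B * C * B = C * (G * (C * (C * (C * (G * C)))))" unfolding B_def by (simp add: massoc)
    also have "\<dots> = C * (G * C)" using E1 by simp
    finally show ?thesis unfolding B_def by (simp add: massoc)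
  qed
  have m3: "transpose_mat (C * B) = C * B"
  proof -
    define P where "P = C * B"
    have P: "P \<in> carrier_mat n n" unfolding P_def using B C by (meson mult_carrier_mat)
    have CP: "C * P = C" unfolding P_def B_def using E1 by (simp add: massoc)
    have PT: "transpose_mat P \<in> carrier_mat n n" using P by simp
    have PtC: "transpose_mat P * C = C"
      using arg_cong[OF CP, of transpose_mat] transpose_mult[OF C P] unfolding sym by simp
    have "transpose_mat P * P = (transpose_mat P * C) * (C * G * C)"
      unfolding P_def B_def using C G by (simp add: massoc)
    also have "\<dots> = C * (C * G * C)" using PtC by simp
    also have "\<dots> = P" unfolding P_def B_def by (simp add: massoc)
    finally have PP: "transpose_mat P * P = P" .
    have "transpose_mat P = transpose_mat (transpose_mat P * P)" using PP by simp
    also have "\<dots> = transpose_mat P * P" using transpose_mult[OF PT P] by simp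
    finally show ?thesis using PP unfolding P_def by simp
  qed
  have m4: "transpose_mat (B * C) = B * C"
  proof -
    define Q where "Q = B * C"
    have Q: "Q \<in> carrier_mat n n" unfolding Q_def using B C by (meson mult_carrier_mat)
    have QT: "transpose_mat Q \<in> carrier_mat n n" using Q by simp
    have QC: "Q * C = C" unfolding Q_def B_def using E2 by (simp add: massoc)
    have t1: "transpose_mat Q = transpose_mat C * transpose_mat B" unfolding Q_def by (rule transpose_mult[OF B C])
    have CG: "C * G \<in> carrier_mat n n" using C G by (meson mult_carrier_mat)
    have t2: "transpose_mat B = transpose_mat C * transpose_mat (C * G)" unfolding B_def
      by (rule transpose_mult[OF CG C])
    have t3: "transpose_mat (C * G) = transpose_mat G * transpose_mat C" by (rule transpose_mult[OF C G])
    have Qt: "transpose_mat Q = C * (C * transpose_mat G * C)"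
      unfolding t1 t2 t3 sym using C G by (simp add: massoc)
    have "Q * transpose_mat Q = (Q * C) * (C * transpose_mat G * C)"
      unfolding Qt using Q C G by (simp add: massoc)
    also have "\<dots> = transpose_mat Q" unfolding QC Qt ..
    finally have QQ: "Q * transpose_mat Q = transpose_mat Q" .
    have "Q = transpose_mat (transpose_mat Q)" by simp
    also have "\<dots> = transpose_mat (Q * transpose_mat Q)" using QQ by simp
    also have "\<dots> = Q * transpose_mat Q" using transpose_mult[OF Q QT] by simp
    finally show ?thesis using QQ unfolding Q_def by simp
  qed
  show ?thesis unfolding is_mp_pinv_def using B C m1 m2 m3 m4 by (intro exI[of _ B]) simp
qed



lemma vec_self_zero:
  fixes r :: "real vec"
  assumes r: "r \<in> carrier_vec n" and z: "r \<bullet> r = 0"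
  shows "r = 0\<^sub>v n"
proof -
  have "(\<Sum>i<n. (r $ i)^2) = 0" using z r by (simp add: scalar_prod_def lessThan_atLeast0 power2_eq_square)
  hence "\<forall>i\<in>{..<n}. (r $ i)^2 = 0" using sum_nonneg_eq_0_iff[of "{..<n}" "\<lambda>i. (r $ i)^2"] by auto
  thus ?thesis using r by (intro eq_vecI) auto
qed

lemma vec_eq_of_minus_zero:
  fixes u v :: "real vec"
  assumes u: "u \<in> carrier_vec n" and v: "v \<in> carrier_vec n" and z: "u - v = 0\<^sub>v n"
  shows "v = u"
proof (rule eq_vecI)
  fix i assume i: "i < dim_vec u"
  have "(u - v) $ i = u $ i - v $ i" using i u v by simp
  moreover have "(u - v) $ i = 0" using z i u by simp
  ultimately show "v $ i = u $ i" by simp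
qed (use u v in simp)

lemma var_min:
  fixes C B :: "real mat" and b :: "real vec" and a :: real
  assumes C: "C \<in> carrier_mat n n" and sym: "transpose_mat C = C" and b: "b \<in> carrier_vec n"
   and mp: "is_mp_pinv C B"
   and J: "\<And>s w. w \<in> carrier_vec n \<Longrightarrow> 0 \<le> s^2 * a + 2 * s * (b \<bullet> w) + w \<bullet> (C *\<^sub>v w)"
  shows "\<forall>w \<in> carrier_vec n. a - b \<bullet> (B *\<^sub>v b) \<le> a - 2 * (b \<bullet> w) + w \<bullet> (C *\<^sub>v w)"
    and "a - b \<bullet> (B *\<^sub>v b) = a - 2 * (b \<bullet> (B *\<^sub>v b)) + (B *\<^sub>v b) \<bullet> (C *\<^sub>v (B *\<^sub>v b))"
proof -
  have B: "B \<in> carrier_mat n n" using mp C unfolding is_mp_pinv_def by auto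
  have CBC: "C * B * C = C" and BCB: "B * C * B = B" and CBs: "transpose_mat (C * B) = C * B"
    using mp unfolding is_mp_pinv_def by auto
  define P where "P = C * B"
  have P: "P \<in> carrier_mat n n" unfolding P_def using C B by (meson mult_carrier_mat)
  have Psym: "transpose_mat P = P" using CBs P_def by simp
  have PC: "P * C = C" using CBC P_def by simp
  have CP: "C * P = C"
  proof -
    have "transpose_mat (P * C) = transpose_mat C * transpose_mat P" by (rule transpose_mult[OF P C])
    thus ?thesis using PC sym Psym by simp
  qed
  have PP: "P * P = P"
  proof -
    have "P * P = (P * C) * B" unfolding P_def using C B by (simp add: massoc)
    thus ?thesis using PC P_def by simp
  qed
  have a0: "0 \<le> a" using J[of "0\<^sub>v n" 1] b C by simp
  define r where "r = b - P *\<^sub>v b"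
  have Pb: "P *\<^sub>v b \<in> carrier_vec n" using P b by simp
  have r: "r \<in> carrier_vec n" unfolding r_def using b Pb by simp
  have Cr: "C *\<^sub>v r = 0\<^sub>v n"
  proof -
    have "C *\<^sub>v r = C *\<^sub>v b - C *\<^sub>v (P *\<^sub>v b)" unfolding r_def by (rule mult_minus_distrib_mat_vec[OF C b Pb])
    also have "C *\<^sub>v (P *\<^sub>v b) = (C * P) *\<^sub>v b" using assoc_mult_mat_vec[OF C P b] by simp
    finally show ?thesis using CP C b by simp
  qed
  have br: "b \<bullet> r = 0"
  proof (rule ccontr)
    assume ne: "b \<bullet> r \<noteq> 0"
    define \<beta> where "\<beta> = b \<bullet> r"
    define t where "t = 1 / (a + 1)"
    have t0: "t > 0" unfolding t_def using a0 by simp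
    have ta: "t * a < 1" unfolding t_def using a0 by (simp add: field_simps)
    have "0 \<le> (-\<beta>*t)^2 * a + 2 * (-\<beta>*t) * \<beta>"
      using J[OF r, of "-\<beta>*t"] Cr r unfolding \<beta>_def by simp
    moreover have "(-\<beta>*t)^2 * a + 2 * (-\<beta>*t) * \<beta> = (\<beta>^2 * t) * (t * a - 2)"
      by (simp add: power2_eq_square algebra_simps)
    moreover have "(\<beta>^2 * t) * (t * a - 2) < 0"
      using t0 ta ne unfolding \<beta>_def by (intro mult_pos_neg) auto
    ultimately show False by linarith
  qed
  have Pr: "P *\<^sub>v r = 0\<^sub>v n"
  proof -
    have "P *\<^sub>v r = P *\<^sub>v b - P *\<^sub>v (P *\<^sub>v b)" unfolding r_def by (rule mult_minus_distrib_mat_vec[OF P b Pb])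
    also have "P *\<^sub>v (P *\<^sub>v b) = (P * P) *\<^sub>v b" using assoc_mult_mat_vec[OF P P b] by simp
    finally show ?thesis using PP P b by simp
  qed
  have rr: "r \<bullet> (b - P *\<^sub>v b) = r \<bullet> b - r \<bullet> (P *\<^sub>v b)" by (rule scalar_prod_minus_distrib[OF r b Pb])
  have "r \<bullet> r = r \<bullet> b - r \<bullet> (P *\<^sub>v b)" using rr by (simp only: r_def[symmetric])
  also have "r \<bullet> (P *\<^sub>v b) = (transpose_mat P *\<^sub>v r) \<bullet> b" using transpose_vec_mult_scalar[OF P b r] by simp
  also have "\<dots> = 0" using Pr Psym b by simp
  also have "r \<bullet> b = 0" using br comm_scalar_prod[OF r b] by simp
  finally have "r \<bullet> r = 0" by simp
  hence r0: "r = 0\<^sub>v n" by (rule vec_self_zero[OF r])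
  define v where "v = B *\<^sub>v b"
  have v: "v \<in> carrier_vec n" unfolding v_def using B b by simp
  have Cv: "C *\<^sub>v v = b"
  proof -
    have "C *\<^sub>v v = P *\<^sub>v b" unfolding v_def P_def using assoc_mult_mat_vec[OF C B b] by simp
    also have "\<dots> = b" using vec_eq_of_minus_zero[OF b Pb] r0 unfolding r_def by simp
    finally show ?thesis .
  qed
  have vb: "v \<bullet> b = b \<bullet> v" using comm_scalar_prod[OF v b] .
  show "a - b \<bullet> (B *\<^sub>v b) = a - 2 * (b \<bullet> (B *\<^sub>v b)) + (B *\<^sub>v b) \<bullet> (C *\<^sub>v (B *\<^sub>v b))"
    using Cv vb unfolding v_def[symmetric] by simp
  show "\<forall>w \<in> carrier_vec n. a - b \<bullet> (B *\<^sub>v b) \<le> a - 2 * (b \<bullet> w) + w \<bullet> (C *\<^sub>v w)"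
  proof
    fix w :: "real vec" assume w: "w \<in> carrier_vec n"
    define u where "u = w - v"
    have u: "u \<in> carrier_vec n" unfolding u_def using w v by simp
    have Cw: "C *\<^sub>v w \<in> carrier_vec n" using C w by simp
    have "0 \<le> u \<bullet> (C *\<^sub>v u)" using J[OF u, of 0] by simp
    also have "C *\<^sub>v u = C *\<^sub>v w - b" unfolding u_def using mult_minus_distrib_mat_vec[OF C w v] Cv by simp
    also have "u \<bullet> (C *\<^sub>v w - b) = u \<bullet> (C *\<^sub>v w) - u \<bullet> b" by (rule scalar_prod_minus_distrib[OF u Cw b])
    also have "u \<bullet> (C *\<^sub>v w) = w \<bullet> (C *\<^sub>v w) - v \<bullet> (C *\<^sub>v w)" unfolding u_def by (rule minus_scalar_prod_distrib[OF w v Cw])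
    also have "u \<bullet> b = w \<bullet> b - v \<bullet> b" unfolding u_def by (rule minus_scalar_prod_distrib[OF w v b])
    also have "v \<bullet> (C *\<^sub>v w) = (transpose_mat C *\<^sub>v v) \<bullet> w" using transpose_vec_mult_scalar[OF C w v] by simp
    also have "\<dots> = b \<bullet> w" using sym Cv by simp
    also have "w \<bullet> b = b \<bullet> w" using comm_scalar_prod[OF w b] .
    finally have "0 \<le> w \<bullet> (C *\<^sub>v w) - 2 * (b \<bullet> w) + b \<bullet> v" using vb by simp
    thus "a - b \<bullet> (B *\<^sub>v b) \<le> a - 2 * (b \<bullet> w) + w \<bullet> (C *\<^sub>v w)" unfolding v_def by simp
  qed
qed



definition Kn :: "(real vec \<Rightarrow> real vec \<Rightarrow> real) \<Rightarrow> real \<Rightarrow> nat \<Rightarrow> real vec list \<Rightarrow> nat \<Rightarrow> nat \<Rightarrow> real" where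
  "Kn k \<sigma> nD ps i j = k (ps ! i) (ps ! j) + (if i = j \<and> i < nD then \<sigma>\<^sup>2 else 0)"

definition Qf :: "(real vec \<Rightarrow> real vec \<Rightarrow> real) \<Rightarrow> real \<Rightarrow> nat \<Rightarrow> real vec \<Rightarrow> real vec list \<Rightarrow> (nat \<Rightarrow> real) \<Rightarrow> real" where
  "Qf k \<sigma> nD z ps c = k z z - 2 * (\<Sum>i<length ps. c i * k z (ps ! i))
     + (\<Sum>i<length ps. c i * (\<Sum>j<length ps. c j * Kn k \<sigma> nD ps i j))"

lemma Km_alt: "Km k \<sigma>n X mbar \<xi> t = mat (length (Xm X mbar \<xi> t)) (length (Xm X mbar \<xi> t))
   (\<lambda>(i, j). Kn k \<sigma>n (dim_col X) (Xm X mbar \<xi> t) i j)"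
  unfolding Km_def Kn_def Let_def by simp

lemma kvec_dot:
  assumes w: "w \<in> carrier_vec (length ps)"
  shows "kvec k z ps \<bullet> w = (\<Sum>i<length ps. w $ i * k z (ps ! i))"
    using w unfolding kvec_def scalar_prod_def by (auto simp: lessThan_atLeast0 intro!: sum.cong)

lemma quadC:
  fixes ps :: "real vec list"
  assumes w: "w \<in> carrier_vec (length ps)"
    and C_def: "C = mat (length ps) (length ps) (\<lambda>(i, j). Kn k \<sigma> nD ps i j)"
  shows "w \<bullet> (C *\<^sub>v w) = (\<Sum>i<length ps. w $ i * (\<Sum>j<length ps. w $ j * Kn k \<sigma> nD ps i j))"
proof -
  have Cw: "(C *\<^sub>v w) $ i = (\<Sum>j<length ps. w $ j * Kn k \<sigma> nD ps i j)" if i: "i < length ps" for i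
  proof -
    have "(C *\<^sub>v w) $ i = row C i \<bullet> w" using i C_def by simp
    also have "\<dots> = (\<Sum>j<length ps. Kn k \<sigma> nD ps i j * w $ j)"
      using i w unfolding C_def scalar_prod_def by (simp add: lessThan_atLeast0)
    finally show ?thesis by (simp add: mult.commute)
  qed
  show ?thesis
    unfolding scalar_prod_def using C_def Cw by (simp add: lessThan_atLeast0)
qed

lemma quad_eq:
  fixes ps :: "real vec list"
  assumes w: "w \<in> carrier_vec (length ps)"
    and C_def: "C = mat (length ps) (length ps) (\<lambda>(i, j). Kn k \<sigma> nD ps i j)"
  shows "k z z - 2 * (kvec k z ps \<bullet> w) + w \<bullet> (C *\<^sub>v w) = Qf k \<sigma> nD z ps (\<lambda>i. w $ i)"
  unfolding Qf_def kvec_dot[OF w] quadC[OF w C_def] by simp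

lemma quad_nonneg:
  assumes kern: "psd_kernel d k" and ps: "set ps \<subseteq> carrier_vec d" and z: "z \<in> carrier_vec d"
  shows "0 \<le> s^2 * k z z + 2 * s * (\<Sum>i<length ps. c i * k z (ps ! i))
     + (\<Sum>i<length ps. c i * (\<Sum>j<length ps. c j * Kn k \<sigma> nD ps i j))"
proof -
  let ?N = "length ps"
  define c' where "c' i = (if i = 0 then s else c (i - 1))" for i
  have symk: "k (ps ! i) z = k z (ps ! i)" if "i < ?N" for i
    using kern ps z that unfolding psd_kernel_def by (meson nth_mem subsetD)
  have zps: "set (z # ps) \<subseteq> carrier_vec d" using ps z by auto
  have "0 \<le> (\<Sum>i<length (z # ps). \<Sum>j<length (z # ps). c' i * c' j * k ((z # ps) ! i) ((z # ps) ! j))"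
    using kern zps unfolding psd_kernel_def by blast
  also have "\<dots> = s * s * k z z + (\<Sum>j<?N. s * c j * k z (ps ! j))
      + (\<Sum>i<?N. c i * s * k (ps ! i) z + (\<Sum>j<?N. c i * c j * k (ps ! i) (ps ! j)))"
    by (simp only: length_Cons sum.lessThan_Suc_shift) (simp add: c'_def sum.distrib)
  also have "\<dots> = s^2 * k z z + 2 * s * (\<Sum>i<?N. c i * k z (ps ! i))
      + (\<Sum>i<?N. \<Sum>j<?N. c i * c j * k (ps ! i) (ps ! j))"
    using symk by (simp add: sum.distrib sum_distrib_left power2_eq_square algebra_simps)
  finally have A: "0 \<le> s^2 * k z z + 2 * s * (\<Sum>i<?N. c i * k z (ps ! i))
      + (\<Sum>i<?N. \<Sum>j<?N. c i * c j * k (ps ! i) (ps ! j))" .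
  have "(\<Sum>i<?N. c i * (\<Sum>j<?N. c j * Kn k \<sigma> nD ps i j))
      = (\<Sum>i<?N. \<Sum>j<?N. c i * c j * k (ps ! i) (ps ! j)) + (\<Sum>i<?N. (if i < nD then c i * c i * \<sigma>\<^sup>2 else 0))"
  proof -
    have inner: "(\<Sum>j<?N. c j * Kn k \<sigma> nD ps i j) = (\<Sum>j<?N. c j * k (ps ! i) (ps ! j)) + (if i < nD then c i * \<sigma>\<^sup>2 else 0)"
      if i: "i < ?N" for i
    proof -
      have "(\<Sum>j<?N. c j * Kn k \<sigma> nD ps i j) = (\<Sum>j<?N. c j * k (ps ! i) (ps ! j) + (if j = i then (if i < nD then c i * \<sigma>\<^sup>2 else 0) else 0))"
        by (rule sum.cong) (auto simp: Kn_def algebra_simps)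
      also have "\<dots> = (\<Sum>j<?N. c j * k (ps ! i) (ps ! j)) + (if i < nD then c i * \<sigma>\<^sup>2 else 0)"
        using i by (simp add: sum.distrib)
      finally show ?thesis .
    qed
    have "(\<Sum>i<?N. c i * (\<Sum>j<?N. c j * Kn k \<sigma> nD ps i j)) = (\<Sum>i<?N. (\<Sum>j<?N. c i * c j * k (ps ! i) (ps ! j)) + (if i < nD then c i * c i * \<sigma>\<^sup>2 else 0))"
      by (rule sum.cong) (auto simp: inner sum_distrib_left algebra_simps)
    thus ?thesis by (simp add: sum.distrib)
  qed
  moreover have "0 \<le> (\<Sum>i<?N. (if i < nD then c i * c i * \<sigma>\<^sup>2 else 0))"
    by (intro sum_nonneg) auto
  ultimately show ?thesis using A by linarith
qed


lemma sum_embed: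
  fixes c c' g :: "nat \<Rightarrow> real"
  assumes inj: "inj_on e {..<N}" and img: "e ` {..<N} \<subseteq> {..<N'}"
   and z: "\<And>j. j < N' \<Longrightarrow> j \<notin> e ` {..<N} \<Longrightarrow> c' j = 0" and ce: "\<And>i. i < N \<Longrightarrow> c' (e i) = c i"
  shows "(\<Sum>j<N'. c' j * g j) = (\<Sum>i<N. c i * g (e i))"
proof -
  have "(\<Sum>j<N'. c' j * g j) = (\<Sum>j\<in>e ` {..<N}. c' j * g j)"
    by (rule sum.mono_neutral_right) (use img z in auto)
  also have "\<dots> = (\<Sum>i<N. c' (e i) * g (e i))" using sum.reindex[OF inj] by simp
  also have "\<dots> = (\<Sum>i<N. c i * g (e i))" using ce by simp
  finally show ?thesis .
qed

lemma Qf_embed: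
  fixes c c' :: "nat \<Rightarrow> real"
  assumes inj: "inj_on e {..<length ps}" and img: "e ` {..<length ps} \<subseteq> {..<length ps'}"
   and z: "\<And>j. j < length ps' \<Longrightarrow> j \<notin> e ` {..<length ps} \<Longrightarrow> c' j = 0"
   and ce: "\<And>i. i < length ps \<Longrightarrow> c' (e i) = c i"
   and pe: "\<And>i. i < length ps \<Longrightarrow> ps' ! (e i) = ps ! i"
   and ne: "\<And>i. i < length ps \<Longrightarrow> (e i < nD) = (i < nD)"
  shows "Qf k \<sigma> nD z ps' c' = Qf k \<sigma> nD z ps c"
proof -
  note se = sum_embed[where e=e and N="length ps" and N'="length ps'" and c'=c' and c=c, OF inj img z ce]
  have 1: "(\<Sum>i<length ps'. c' i * k z (ps' ! i)) = (\<Sum>i<length ps. c i * k z (ps ! i))"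
    using se[of "\<lambda>j. k z (ps' ! j)"] pe by simp
  have Kne: "Kn k \<sigma> nD ps' (e i) (e j) = Kn k \<sigma> nD ps i j" if "i < length ps" "j < length ps" for i j
  proof -
    have "(e i = e j) = (i = j)" using inj that unfolding inj_on_def by auto
    thus ?thesis unfolding Kn_def using pe ne that by simp
  qed
  have "(\<Sum>i<length ps'. c' i * (\<Sum>j<length ps'. c' j * Kn k \<sigma> nD ps' i j))
      = (\<Sum>i<length ps. c i * (\<Sum>j<length ps'. c' j * Kn k \<sigma> nD ps' (e i) j))"
    by (rule se)
  also have "\<dots> = (\<Sum>i<length ps. c i * (\<Sum>j<length ps. c j * Kn k \<sigma> nD ps' (e i) (e j)))"
    using se by simp
  also have "\<dots> = (\<Sum>i<length ps. c i * (\<Sum>j<length ps. c j * Kn k \<sigma> nD ps i j))"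
    using Kne by simp
  finally show ?thesis unfolding Qf_def 1 by simp
qed



lemma var_generic:
  fixes ps :: "real vec list" and z :: "real vec"
  assumes kern: "psd_kernel d k" and ps: "set ps \<subseteq> carrier_vec d" and z: "z \<in> carrier_vec d"
    and C_def: "C = mat (length ps) (length ps) (\<lambda>(i, j). Kn k \<sigma> nD ps i j)"
    and b_def: "b = kvec k z ps"
  shows "\<forall>w\<in>carrier_vec (length ps). k z z - b \<bullet> (mp_pinv C *\<^sub>v b) \<le> Qf k \<sigma> nD z ps (\<lambda>i. w $ i)"
    and "\<exists>v\<in>carrier_vec (length ps). k z z - b \<bullet> (mp_pinv C *\<^sub>v b) = Qf k \<sigma> nD z ps (\<lambda>i. v $ i)"
proof -
  let ?N = "length ps"
  have C: "C \<in> carrier_mat ?N ?N" unfolding C_def by simp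
  have b: "b \<in> carrier_vec ?N" unfolding b_def kvec_def by simp
  have symk: "k (ps ! i) (ps ! j) = k (ps ! j) (ps ! i)" if "i < ?N" "j < ?N" for i j
    using kern ps that unfolding psd_kernel_def by (meson nth_mem subsetD)
  have sym: "transpose_mat C = C"
    by (rule eq_matI) (auto simp: C_def Kn_def symk)
  have mp: "is_mp_pinv C (mp_pinv C)"
    unfolding mp_pinv_def by (rule someI_ex) (rule mp_exists_sym[OF C sym])
  have J: "0 \<le> s^2 * k z z + 2 * s * (b \<bullet> w) + w \<bullet> (C *\<^sub>v w)" if w: "w \<in> carrier_vec ?N" for s w
    using quad_nonneg[OF kern ps z, of s "\<lambda>i. w $ i" \<sigma> nD]
    unfolding b_def kvec_dot[OF w] quadC[OF w C_def] by simp
  note vm = var_min[OF C sym b mp J]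
  show "\<forall>w\<in>carrier_vec ?N. k z z - b \<bullet> (mp_pinv C *\<^sub>v b) \<le> Qf k \<sigma> nD z ps (\<lambda>i. w $ i)"
    using vm(1) quad_eq[OF _ C_def] unfolding b_def by simp
  have v: "mp_pinv C *\<^sub>v b \<in> carrier_vec ?N"
    using mp C b unfolding is_mp_pinv_def by auto
  show "\<exists>v\<in>carrier_vec ?N. k z z - b \<bullet> (mp_pinv C *\<^sub>v b) = Qf k \<sigma> nD z ps (\<lambda>i. v $ i)"
    using vm(2) quad_eq[OF v C_def] v unfolding b_def by auto
qed


lemma Xm_length: "length (Xm X mb \<xi> t) = dim_col X + min t mb"
  unfolding Xm_def mem_pts_def by simp

lemma Xm_nth: assumes "i < dim_col X + min t mb"
  shows "Xm X mb \<xi> t ! i = (if i < dim_col X then col X i else \<xi> (t - min t mb + (i - dim_col X)))"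
proof (cases "i < dim_col X")
  case True thus ?thesis unfolding Xm_def mem_pts_def by (simp add: nth_append)
next
  case False
  hence j: "i - dim_col X < min t mb" using assms by linarith
  have "map \<xi> [t - min t mb..<t] ! (i - dim_col X) = \<xi> (t - min t mb + (i - dim_col X))"
  proof -
    have u: "[t - min t mb..<t] ! (i - dim_col X) = t - min t mb + (i - dim_col X)"
      using j by (intro nth_upt) linarith
    have l: "i - dim_col X < length [t - min t mb..<t]" using j by simp
    show ?thesis unfolding nth_map[OF l] u ..
  qed
  thus ?thesis using False unfolding Xm_def mem_pts_def by (simp add: nth_append)
qed

lemma Xm_carrier: assumes X: "X \<in> carrier_mat d nD" and xi: "\<And>s. \<xi> s \<in> carrier_vec d"
  shows "set (Xm X mb \<xi> t) \<subseteq> carrier_vec d"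
  using X xi cols_dim[of X] unfolding Xm_def mem_pts_def by auto

lemma GP_var_eq: "GP_var k \<sigma>n X mb \<xi> t = k (\<xi> t) (\<xi> t) - kvec k (\<xi> t) (Xm X mb \<xi> t) \<bullet>
   (mp_pinv (mat (length (Xm X mb \<xi> t)) (length (Xm X mb \<xi> t)) (\<lambda>(i, j). Kn k \<sigma>n (dim_col X) (Xm X mb \<xi> t) i j))
     *\<^sub>v kvec k (\<xi> t) (Xm X mb \<xi> t))"
  unfolding GP_var_def Let_def Km_alt ..

lemma var_mono:
  assumes X: "X \<in> carrier_mat d nD" and xi: "\<And>s. \<xi> s \<in> carrier_vec d"
    and kern: "psd_kernel d k" and mem: "mbar \<le> mbar'"
  shows "GP_var k \<sigma>n X mbar' \<xi> t \<le> GP_var k \<sigma>n X mbar \<xi> t"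
proof -
  define z where "z = \<xi> t"
  have z: "z \<in> carrier_vec d" unfolding z_def by (rule xi)
  define ps where "ps = Xm X mbar \<xi> t"
  define ps' where "ps' = Xm X mbar' \<xi> t"
  define m where "m = min t mbar"
  define m2 where "m2 = min t mbar'"
  define dd where "dd = m2 - m"
  have mm: "m \<le> m2" "m2 \<le> t" unfolding m_def m2_def using mem by auto
  have nD: "dim_col X = nD" using X by simp
  have lps: "length ps = nD + m" unfolding ps_def m_def Xm_length nD ..
  have lps': "length ps' = nD + m2" unfolding ps'_def m2_def Xm_length nD ..
  have psC: "set ps \<subseteq> carrier_vec d" using Xm_carrier[OF X xi] unfolding ps_def .
  have psC': "set ps' \<subseteq> carrier_vec d" using Xm_carrier[OF X xi] unfolding ps'_def .
  have veq0: "GP_var k \<sigma>n X mbar \<xi> t = k z z - kvec k z ps \<bullet> (mp_pinv (mat (length ps) (length ps)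
     (\<lambda>(i, j). Kn k \<sigma>n nD ps i j)) *\<^sub>v kvec k z ps)" unfolding GP_var_eq nD ps_def z_def ..
  have veq0': "GP_var k \<sigma>n X mbar' \<xi> t = k z z - kvec k z ps' \<bullet> (mp_pinv (mat (length ps') (length ps')
     (\<lambda>(i, j). Kn k \<sigma>n nD ps' i j)) *\<^sub>v kvec k z ps')" unfolding GP_var_eq nD ps'_def z_def ..
  obtain v where v: "v \<in> carrier_vec (length ps)"
    and veq: "GP_var k \<sigma>n X mbar \<xi> t = Qf k \<sigma>n nD z ps (\<lambda>i. v $ i)"
    using var_generic(2)[OF kern psC z refl refl] unfolding veq0 by blast
  define c' where "c' j = (if j < nD then v $ j else if j < nD + dd then 0 else v $ (j - dd))" for j
  define w' where "w' = vec (length ps') c'"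
  have w': "w' \<in> carrier_vec (length ps')" unfolding w'_def by simp
  have le: "GP_var k \<sigma>n X mbar' \<xi> t \<le> Qf k \<sigma>n nD z ps' (\<lambda>i. w' $ i)"
    using var_generic(1)[OF kern psC' z refl refl] w' unfolding veq0' by blast
  define e where "e i = (if i < nD then i else i + dd)" for i
  have inj: "inj_on e {..<length ps}" unfolding inj_on_def e_def by auto
  have img: "e ` {..<length ps} \<subseteq> {..<length ps'}" unfolding e_def lps lps' dd_def using mm by auto
  have zz: "(\<lambda>i. w' $ i) j = 0" if j: "j < length ps'" "j \<notin> e ` {..<length ps}" for j
  proof -
    have "\<not> j < nD"
    proof
      assume "j < nD" hence "e j = j" "j < length ps" unfolding e_def lps by auto
      thus False using j by force
    qed
    moreover have "\<not> nD + dd \<le> j"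
    proof
      assume a: "nD + dd \<le> j"
      hence "e (j - dd) = j" "j - dd < length ps" unfolding e_def lps using j(1) lps' mm dd_def by auto
      thus False using j by force
    qed
    ultimately show ?thesis using j unfolding w'_def c'_def by auto
  qed
  have ce: "(\<lambda>i. w' $ i) (e i) = v $ i" if i: "i < length ps" for i
    using i img unfolding w'_def c'_def e_def by auto
  have pe: "ps' ! (e i) = ps ! i" if i: "i < length ps" for i
  proof (cases "i < nD")
    case True
    thus ?thesis using i Xm_nth[of i X t mbar \<xi>] Xm_nth[of i X t mbar' \<xi>] lps lps' mm
      unfolding ps_def ps'_def e_def nD m_def m2_def by auto
  next
    case False
    have "e i < dim_col X + min t mbar'" using img i lps' nD m2_def by auto
    hence "ps' ! (e i) = \<xi> (t - m2 + (i + dd - nD))"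
      using Xm_nth[of "e i" X t mbar' \<xi>] False unfolding ps'_def e_def nD m2_def by auto
    also have "t - m2 + (i + dd - nD) = t - m + (i - nD)" using False mm unfolding dd_def by auto
    also have "\<xi> \<dots> = ps ! i" using Xm_nth[of i X t mbar \<xi>] False i lps
      unfolding ps_def nD m_def by auto
    finally show ?thesis .
  qed
  have ne: "(e i < nD) = (i < nD)" for i unfolding e_def by auto
  have "Qf k \<sigma>n nD z ps' (\<lambda>i. w' $ i) = Qf k \<sigma>n nD z ps (\<lambda>i. v $ i)"
    by (rule Qf_embed[where c'="\<lambda>i. w' $ i" and c="\<lambda>i. v $ i", OF inj img zz ce pe ne])
  thus ?thesis using le veq by simp
qed


lemma trace_GP_F: "mat_trace (GP_F k \<sigma>n X nx mb \<xi> t) = real nx * GP_var k \<sigma>n X mb \<xi> t"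
  unfolding mat_trace_def GP_F_def by simp

theorem corollary2:
  fixes k :: "real vec \<Rightarrow> real vec \<Rightarrow> real"
    and m :: "real vec \<Rightarrow> real"
    and \<sigma>n :: real
    and X Y :: "real mat"
    and nx nu nD mbar mbar' t :: nat
    and x u \<xi> :: "nat \<Rightarrow> real vec"
  assumes X: "X \<in> carrier_mat (nx + nu) nD"
    and Y: "Y \<in> carrier_mat nD nx"
    and kern: "psd_kernel (nx + nu) k"
    and mcont: "cont_mean (nx + nu) m"
    and xdim: "\<And>s. x s \<in> carrier_vec nx"
    and udim: "\<And>s. u s \<in> carrier_vec nu"
    and xi: "\<And>s. \<xi> s = x s @\<^sub>v u s"
    and mem: "mbar' > mbar"
  shows "mat_trace (GP_F k \<sigma>n X nx mbar' \<xi> t) \<le> mat_trace (GP_F k \<sigma>n X nx mbar \<xi> t)"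
proof -
  have xi': "\<xi> s \<in> carrier_vec (nx + nu)" for s using xi xdim udim by simp
  have "GP_var k \<sigma>n X mbar' \<xi> t \<le> GP_var k \<sigma>n X mbar \<xi> t"
    by (rule var_mono[OF X xi' kern]) (use mem in simp)
  thus ?thesis unfolding trace_GP_F by (intro mult_left_mono) auto
qed

end
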